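(* Let $\mathcal F$ be a filtration array, $E=(E_{m,n})_{m,n\in\mathbb N}$ a nonnegative process adapted to $\mathcal F$, and $S=(S_n)_{n\in\mathbb N}$ a process adapted to $\mathcal F_{\infty,\bullet}$. If $E$ has the asymptotic supermartingale property (in $L_1$, for $\mathcal F$, uniformly in $\mathcal P$) and $E$ converges to $S$ in $L_1$ uniformly in $\mathcal P$, then $S$ is a supermartingale for $\mathcal P$ with respect to $\mathcal F_{\infty,\bullet}$.
   Context: $(\Omega,\mathcal A)$ is a measurable space, $\mathcal P$ a set of probability measures on it, $\mathbb N=\{0,1,\dots\}$. A filtration array is a family $(\mathcal F_{m,n})_{m,n\in\mathbb N}$ of sub-$\sigma$-algebras with $\mathcal F_{m,n}\subset\mathcal F_{m+1,n}\cap\mathcal F_{m,n+1}$; $\mathcal F_{\infty,n}:=\sigma(\bigcup_m\mathcal F_{m,n})$. Adapted means $E_{m,n}$ is $\mathcal F_{m,n}$-measurable. For $P\in\mathcal P$, $\delta_{m,n}=\mathbb E_P[E_{m,n+1}\mid\mathcal F_{m,n}]-E_{m,n}$ if $E_{m,n+1}$ is $P$-integrable and $\delta_{m,n}=\infty$ otherwise; $x^+=\max\{x,0\}$. The asymptotic supermartingale property: $\lim_m\sup_{P\in\mathcal P}\mathbb E_P[\delta_{m,n}^+]=0$ for every $n$. $E$ converges to $S$ in $L_1$ uniformly in $\mathcal P$ if all $E_{m,n},S_n$ are $P$-integrable for all $P\in\mathcal P$ and $\lim_m\sup_{P\in\mathcal P}\mathbb E_P[|E_{m,n}-S_n|]=0$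 for every $n$. A supermartingale for $\mathcal P$ w.r.t. a filtration $\mathcal G$ is a $\mathcal G$-adapted process with each $S_n$ $P$-integrable and $\mathbb E_P[S_{n+1}\mid\mathcal G_n]\le S_n$ $P$-a.s. for all $P\in\mathcal P$, $n$. *)

theory Defs
  imports "HOL-Probability.Probability"
begin

text \<open>Sub-sigma-algebras of the measurable space M are represented as measures
  whose space and sets are used (the measure itself is irrelevant).\<close>

definition filtration_array :: "'a measure \<Rightarrow> (nat \<Rightarrow> nat \<Rightarrow> 'a measure) \<Rightarrow> bool" where
  "filtration_array M F \<longleftrightarrow>
     (\<forall>m n. subalgebra M (F m n)) \<and>
     (\<forall>m n. sets (F m n) \<subseteq> sets (F (Suc m) n) \<inter> sets (F m (Suc n)))"

definition Finf :: "'a measure \<Rightarrow> (nat \<Rightarrow> nat \<Rightarrow> 'a measure) \<Rightarrow> nat \<Rightarrow> 'a measure" where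
  "Finf M F n = sigma (space M) (\<Union>m. sets (F m n))"

definition delta_pos_exp ::
  "'a measure \<Rightarrow> (nat \<Rightarrow> nat \<Rightarrow> 'a measure) \<Rightarrow> (nat \<Rightarrow> nat \<Rightarrow> 'a \<Rightarrow> real) \<Rightarrow> nat \<Rightarrow> nat \<Rightarrow> ennreal" where
  "delta_pos_exp P F E m n =
     (if integrable P (E m (Suc n))
      then \<integral>\<^sup>+ x. ennreal (max 0 (real_cond_exp P (F m n) (E m (Suc n)) x - E m n x)) \<partial>P
      else \<infinity>)"

definition asymptotic_supermartingale ::
  "'a measure set \<Rightarrow> (nat \<Rightarrow> nat \<Rightarrow> 'a measure) \<Rightarrow> (nat \<Rightarrow> nat \<Rightarrow> 'a \<Rightarrow> real) \<Rightarrow> bool" where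
  "asymptotic_supermartingale Ps F E \<longleftrightarrow>
     (\<forall>n. (\<lambda>m. SUP P\<in>Ps. delta_pos_exp P F E m n) \<longlonglongrightarrow> 0)"

definition uniform_L1_conv ::
  "'a measure set \<Rightarrow> (nat \<Rightarrow> nat \<Rightarrow> 'a \<Rightarrow> real) \<Rightarrow> (nat \<Rightarrow> 'a \<Rightarrow> real) \<Rightarrow> bool" where
  "uniform_L1_conv Ps E S \<longleftrightarrow>
     (\<forall>P\<in>Ps. (\<forall>m n. integrable P (E m n)) \<and> (\<forall>n. integrable P (S n))) \<and>
     (\<forall>n. (\<lambda>m. SUP P\<in>Ps. \<integral>\<^sup>+ x. ennreal \<bar>E m n x - S n x\<bar> \<partial>P) \<longlonglongrightarrow> 0)"

definition supermartingale_for ::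
  "'a measure set \<Rightarrow> (nat \<Rightarrow> 'a measure) \<Rightarrow> (nat \<Rightarrow> 'a \<Rightarrow> real) \<Rightarrow> bool" where
  "supermartingale_for Ps G S \<longleftrightarrow>
     (\<forall>n. S n \<in> borel_measurable (G n)) \<and>
     (\<forall>P\<in>Ps. \<forall>n. integrable P (S n) \<and>
        (AE x in P. real_cond_exp P (G n) (S (Suc n)) x \<le> S n x))"

end

theory Submission
  imports Defs
begin

lemma cond_le_from_sets:
  assumes ps: "prob_space P" and sub: "subalgebra P G"
    and ig: "integrable P g" and ih: "integrable P h" and hm: "h \<in> borel_measurable G"
    and le: "\<And>B. B \<in> sets G \<Longrightarrow> (\<integral>x\<in>B. g x \<partial>P) \<le> (\<integral>x\<in>B. h x \<partial>P)"
  shows "AE x in P. real_cond_exp P G g x \<le> h x"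
proof -
  interpret prob_space P by fact
  interpret finite_measure_subalgebra P G
    by unfold_locales (rule sub)
  define c where "c = real_cond_exp P G g"
  have cG: "c \<in> borel_measurable G" unfolding c_def by simp
  have ic: "integrable P c" unfolding c_def using ig by (rule real_cond_exp_int(1))
  define B where "B = {x\<in>space G. c x - h x > 0}"
  have BG: "B \<in> sets G" unfolding B_def using cG hm by measurable
  have BP: "B \<in> sets P" using BG sub unfolding subalgebra_def by auto
  have "(\<integral>x\<in>B. c x \<partial>P) = (\<integral>x\<in>B. g x \<partial>P)" unfolding c_def
    using real_cond_exp_intA[OF ig BG] by simp
  also have "\<dots> \<le> (\<integral>x\<in>B. h x \<partial>P)" using le BG by simp
  finally have le1: "(\<integral>x\<in>B. c x \<partial>P) \<le> (\<integral>x\<in>B. h x \<partial>P)" .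
  have "(\<integral>x\<in>B. (c x - h x) \<partial>P) \<le> 0"
  proof -
    have "set_integrable P B c" "set_integrable P B h"
      unfolding set_integrable_def using ic ih BP integrable_mult_indicator by blast+
    then show ?thesis using set_integral_diff(2)[of P B c h] le1 by simp
  qed
  hence i0: "(\<integral>x. indicator B x * (c x - h x) \<partial>P) \<le> 0"
    unfolding set_lebesgue_integral_def by simp
  have nn: "\<And>x. 0 \<le> indicator B x * (c x - h x)"
    unfolding B_def indicator_def by auto
  have iB: "integrable P (\<lambda>x. indicator B x * (c x - h x))"
    using BP ic ih integrable_mult_indicator[of B P "\<lambda>x. c x - h x"] by simp
  have "(\<integral>x. indicator B x * (c x - h x) \<partial>P) = 0"
    using i0 Bochner_Integration.integral_nonneg[of P "\<lambda>x. indicator B x * (c x - h x)"] nn by (meson antisym)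
  hence "AE x in P. indicator B x * (c x - h x) = 0"
    using integral_nonneg_eq_0_iff_AE[OF iB] nn by simp
  moreover have "AE x in P. x \<in> space P" by simp
  ultimately show ?thesis
  proof (eventually_elim)
    case (elim x)
    then show ?case unfolding c_def[symmetric]
      using sub unfolding B_def subalgebra_def indicator_def
      by (auto split: if_splits)
  qed
qed


lemma fin_union_closed:
  fixes K :: nat
  assumes emp: "{} \<in> A0" and un: "\<And>A B. A \<in> A0 \<Longrightarrow> B \<in> A0 \<Longrightarrow> A \<union> B \<in> A0"
    and As: "\<And>i. As i \<in> A0"
  shows "(\<Union>i<K. As i) \<in> A0"
proof (induction K)
  case 0 then show ?case using emp by simp
next
  case (Suc K)
  have "(\<Union>i<Suc K. As i) = (\<Union>i<K. As i) \<union> As K" by (auto simp: lessThan_Suc)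
  then show ?case using Suc un As by simp
qed

lemma approx_sigma:
  assumes fin: "finite_measure N"
    and sub: "A0 \<subseteq> sets N" and Om: "\<Omega> = space N"
    and emp: "{} \<in> A0" and cmp: "\<And>A. A \<in> A0 \<Longrightarrow> \<Omega> - A \<in> A0"
    and un: "\<And>A B. A \<in> A0 \<Longrightarrow> B \<in> A0 \<Longrightarrow> A \<union> B \<in> A0"
    and B: "B \<in> sigma_sets \<Omega> A0"
  shows "\<forall>e>0. \<exists>A\<in>A0. measure N ((A - B) \<union> (B - A)) < e"
proof -
  interpret finite_measure N by fact
  have Pw: "A0 \<subseteq> Pow \<Omega>" using sub Om sets.sets_into_space by blast
  have SS: "sigma_sets \<Omega> A0 \<subseteq> sets N" using sub Om sets.sigma_sets_subset by blast
  have Ist: "Int_stable A0"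
  proof (rule Int_stableI)
    fix a b assume ab: "a \<in> A0" "b \<in> A0"
    have "a \<inter> b = \<Omega> - ((\<Omega> - a) \<union> (\<Omega> - b))" using ab Pw by blast
    then show "a \<inter> b \<in> A0" using ab cmp un by simp
  qed
  from Ist Pw B show ?thesis
  proof (induction rule: sigma_sets_induct_disjoint)
    case (basic A)
    then show ?case by (intro allI impI bexI[of _ A]) auto
  next
    case empty
    then show ?case using emp by (intro allI impI bexI[of _ "{}"]) auto
  next
    case (compl B)
    show ?case
    proof (intro allI impI)
      fix e :: real assume e: "e > 0"
      then obtain A where A: "A \<in> A0" "measure N ((A - B) \<union> (B - A)) < e" using compl by blast
      have "B \<subseteq> \<Omega>" using compl(1) sigma_sets_into_sp[OF Pw] by blast
      moreover have "A \<subseteq> \<Omega>" using A Pw by blast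
      ultimately have "((\<Omega> - A) - (\<Omega> - B)) \<union> ((\<Omega> - B) - (\<Omega> - A)) = (A - B) \<union> (B - A)" by blast
      then show "\<exists>A\<in>A0. measure N ((A - (\<Omega> - B)) \<union> ((\<Omega> - B) - A)) < e"
        using A cmp by (intro bexI[of _ "\<Omega> - A"]) auto
    qed
  next
    case (union Bs)
    show ?case
    proof (intro allI impI)
      fix e :: real assume e: "e > 0"
      define U where "U = (\<Union>i. Bs i)"
      define C where "C k = (\<Union>i<k. Bs i)" for k
      have Bs_sets: "\<And>i. Bs i \<in> sets N" using union(2) SS by blast
      have C_sets: "\<And>k. C k \<in> sets N" unfolding C_def using Bs_sets by auto
      have U_sets: "U \<in> sets N" unfolding U_def using Bs_sets by auto
      have "incseq C" unfolding C_def incseq_def by (auto intro: less_le_trans)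
      moreover have "(\<Union>k. C k) = U" unfolding C_def U_def by auto
      ultimately have lim: "(\<lambda>k. measure N (C k)) \<longlonglongrightarrow> measure N U"
        using finite_Lim_measure_incseq[of C] C_sets by auto
      have "eventually (\<lambda>k. measure N U - e/2 < measure N (C k)) sequentially"
        using lim e by (intro order_tendstoD(1)) auto
      then obtain K where K: "measure N U - e/2 < measure N (C K)"
        by (auto simp: eventually_sequentially)
      have CU: "C K \<subseteq> U" unfolding C_def U_def by auto
      have m1: "measure N (U - C K) < e/2"
        using K CU finite_measure_Diff[OF U_sets C_sets CU] by simp
      define d where "d = e / (2 * (real K + 1))"
      have d: "d > 0" using e unfolding d_def by simp
      have "\<forall>i. \<exists>A\<in>A0. measure N ((A - Bs i) \<union> (Bs i - A)) < d"
        using union(3) d by blast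
      then obtain As where As: "\<And>i. As i \<in> A0" "\<And>i. measure N ((As i - Bs i) \<union> (Bs i - As i)) < d"
        by metis
      define A' where "A' = (\<Union>i<K. As i)"
      have A'0: "A' \<in> A0" unfolding A'_def using fin_union_closed[OF emp un As(1)] .
      have As_sets: "\<And>i. As i \<in> sets N" using As(1) sub by blast
      define D where "D i = (As i - Bs i) \<union> (Bs i - As i)" for i
      have D_sets: "\<And>i. D i \<in> sets N" unfolding D_def using As_sets Bs_sets by auto
      have incl: "(A' - U) \<union> (U - A') \<subseteq> (U - C K) \<union> (\<Union>i<K. D i)"
        unfolding A'_def U_def C_def D_def by blast
      have "measure N ((A' - U) \<union> (U - A')) \<le> measure N ((U - C K) \<union> (\<Union>i<K. D i))"
        using incl U_sets C_sets D_sets by (intro finite_measure_mono) auto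
      also have "\<dots> \<le> measure N (U - C K) + measure N (\<Union>i<K. D i)"
        using U_sets C_sets D_sets by (intro measure_subadditive) (auto simp: emeasure_eq_measure)
      also have "measure N (\<Union>i<K. D i) \<le> (\<Sum>i<K. measure N (D i))"
        using D_sets by (intro finite_measure_subadditive_finite) auto
      also have "(\<Sum>i<K. measure N (D i)) \<le> (\<Sum>i<K. d)"
        using As(2) unfolding D_def by (intro sum_mono) (simp add: less_imp_le)
      also have "(\<Sum>i<K. d) \<le> e/2"
      proof -
        have "(\<Sum>i<K. d) = real K * e / (2 * (real K + 1))" unfolding d_def by simp
        also have "\<dots> \<le> e/2" using e by (simp add: field_simps)
        finally show ?thesis .
      qed
      finally have "measure N ((A' - U) \<union> (U - A')) < e" using m1 by linarith
      then show "\<exists>A\<in>A0. measure N ((A - (\<Union>i. Bs i)) \<union> ((\<Union>i. Bs i) - A)) < e"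
        using A'0 unfolding U_def by blast
    qed
  qed
qed


lemma measure_density_abs:
  assumes f: "integrable P f" and X: "X \<in> sets P"
  shows "measure (density P (\<lambda>x. ennreal \<bar>f x\<bar>)) X = (\<integral>x. \<bar>f x\<bar> * indicator X x \<partial>P)"
proof -
  have fm: "f \<in> borel_measurable P" using f by auto
  have "emeasure (density P (\<lambda>x. ennreal \<bar>f x\<bar>)) X = (\<integral>\<^sup>+ x. ennreal \<bar>f x\<bar> * indicator X x \<partial>P)"
    using fm X by (intro emeasure_density) auto
  also have "\<dots> = (\<integral>\<^sup>+ x. ennreal (\<bar>f x\<bar> * indicator X x) \<partial>P)"
    by (intro nn_integral_cong) (auto simp: indicator_def)
  finally show ?thesis unfolding measure_def
    using integral_eq_nn_integral[of "\<lambda>x. \<bar>f x\<bar> * indicator X x" P] fm X by simp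
qed

lemma setint_diff_bound:
  assumes f: "integrable P f" and A: "A \<in> sets P" and B: "B \<in> sets P"
  shows "\<bar>(\<integral>x\<in>B. f x \<partial>P) - (\<integral>x\<in>A. f x \<partial>P)\<bar>
     \<le> measure (density P (\<lambda>x. ennreal \<bar>f x\<bar>)) ((A - B) \<union> (B - A))"
proof -
  define X where "X = (A - B) \<union> (B - A)"
  have X: "X \<in> sets P" unfolding X_def using A B by auto
  have iA: "integrable P (\<lambda>x. indicator A x * f x)" using integrable_mult_indicator[OF A f] by simp
  have iB: "integrable P (\<lambda>x. indicator B x * f x)" using integrable_mult_indicator[OF B f] by simp
  have "(\<integral>x\<in>B. f x \<partial>P) - (\<integral>x\<in>A. f x \<partial>P) = (\<integral>x. indicator B x * f x - indicator A x * f x \<partial>P)"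
    unfolding set_lebesgue_integral_def using iA iB by simp
  also have "\<bar>\<dots>\<bar> \<le> (\<integral>x. \<bar>indicator B x * f x - indicator A x * f x\<bar> \<partial>P)"
    using integral_norm_bound[of P "\<lambda>x. indicator B x * f x - indicator A x * f x"] by simp
  also have "\<dots> = (\<integral>x. \<bar>f x\<bar> * indicator X x \<partial>P)"
    by (intro Bochner_Integration.integral_cong) (auto simp: X_def indicator_def)
  also have "\<dots> = measure (density P (\<lambda>x. ennreal \<bar>f x\<bar>)) X"
    using measure_density_abs[OF f X] by simp
  finally show ?thesis unfolding X_def .
qed

lemma finite_density_abs:
  assumes "finite_measure P" "integrable P f"
  shows "finite_measure (density P (\<lambda>x. ennreal \<bar>f x\<bar>))"
proof (rule finite_measureI)
  have "emeasure (density P (\<lambda>x. ennreal \<bar>f x\<bar>)) (space P) = (\<integral>\<^sup>+ x. ennreal \<bar>f x\<bar> * indicator (space P) x \<partial>P)"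
    using assms by (intro emeasure_density) auto
  also have "\<dots> = (\<integral>\<^sup>+ x. ennreal (norm (f x)) \<partial>P)"
    by (intro nn_integral_cong) auto
  also have "\<dots> < \<infinity>" using assms(2) by (simp add: integrable_iff_bounded)
  finally show "emeasure (density P (\<lambda>x. ennreal \<bar>f x\<bar>)) (space (density P (\<lambda>x. ennreal \<bar>f x\<bar>))) \<noteq> \<infinity>"
    by simp
qed


lemma sup_tendsto0:
  fixes g :: "'b \<Rightarrow> nat \<Rightarrow> ennreal"
  assumes "(\<lambda>m. SUP P\<in>Ps. g P m) \<longlonglongrightarrow> 0" "P \<in> Ps"
  shows "(\<lambda>m. g P m) \<longlonglongrightarrow> 0"
  by (rule tendsto_sandwich[of "\<lambda>_. 0" _ _ "\<lambda>m. SUP P\<in>Ps. g P m"])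
     (use assms in \<open>auto intro!: always_eventually SUP_upper\<close>)

lemma setint_tendsto:
  assumes X: "\<And>m. integrable P (X m)" and Y: "integrable P Y"
    and c: "(\<lambda>m. \<integral>\<^sup>+ x. ennreal \<bar>X m x - Y x\<bar> \<partial>P) \<longlonglongrightarrow> 0" and A: "A \<in> sets P"
  shows "(\<lambda>m. \<integral>x\<in>A. X m x \<partial>P) \<longlonglongrightarrow> (\<integral>x\<in>A. Y x \<partial>P)"
proof -
  have "(\<lambda>m. enn2real (\<integral>\<^sup>+ x. ennreal \<bar>X m x - Y x\<bar> \<partial>P)) \<longlonglongrightarrow> enn2real 0"
    using c by (intro tendsto_enn2real) auto
  moreover have "enn2real (\<integral>\<^sup>+ x. ennreal \<bar>X m x - Y x\<bar> \<partial>P) = (\<integral>x. \<bar>X m x - Y x\<bar> \<partial>P)" for m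
      using X Y by (subst integral_eq_nn_integral) auto
  ultimately have c': "(\<lambda>m. (\<integral>x. \<bar>X m x - Y x\<bar> \<partial>P)) \<longlonglongrightarrow> 0" by simp
  have b: "norm ((\<integral>x\<in>A. X m x \<partial>P) - (\<integral>x\<in>A. Y x \<partial>P)) \<le> (\<integral>x. \<bar>X m x - Y x\<bar> \<partial>P)" for m
  proof -
    have iA: "integrable P (\<lambda>x. indicator A x * X m x)" using integrable_mult_indicator[OF A X] by simp
    have iB: "integrable P (\<lambda>x. indicator A x * Y x)" using integrable_mult_indicator[OF A Y] by simp
    have "(\<integral>x\<in>A. X m x \<partial>P) - (\<integral>x\<in>A. Y x \<partial>P) = (\<integral>x. indicator A x * X m x - indicator A x * Y x \<partial>P)"
      unfolding set_lebesgue_integral_def using iA iB by simp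
    also have "norm \<dots> \<le> (\<integral>x. norm (indicator A x * X m x - indicator A x * Y x) \<partial>P)"
      by (rule integral_norm_bound)
    also have "\<dots> \<le> (\<integral>x. \<bar>X m x - Y x\<bar> \<partial>P)"
      using iA iB X Y
      by (intro integral_mono) (auto simp: indicator_def)
    finally show ?thesis .
  qed
  have "(\<lambda>m. (\<integral>x\<in>A. X m x \<partial>P) - (\<integral>x\<in>A. Y x \<partial>P)) \<longlonglongrightarrow> 0"
    by (rule Lim_null_comparison[OF always_eventually c']) (use b in auto)
  hence "(\<lambda>m. ((\<integral>x\<in>A. X m x \<partial>P) - (\<integral>x\<in>A. Y x \<partial>P)) + (\<integral>x\<in>A. Y x \<partial>P)) \<longlonglongrightarrow> 0 + (\<integral>x\<in>A. Y x \<partial>P)"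
    by (intro tendsto_add) auto
  then show ?thesis by simp
qed


theorem mainTheorem8:
  fixes M :: "'a measure" and Ps :: "'a measure set"
    and F :: "nat \<Rightarrow> nat \<Rightarrow> 'a measure"
    and E :: "nat \<Rightarrow> nat \<Rightarrow> 'a \<Rightarrow> real" and S :: "nat \<Rightarrow> 'a \<Rightarrow> real"
  assumes Ps: "\<And>P. P \<in> Ps \<Longrightarrow> prob_space P \<and> sets P = sets M"
    and filt: "filtration_array M F"
    and E_adapted: "\<And>m n. E m n \<in> borel_measurable (F m n)"
    and E_nonneg: "\<And>m n x. x \<in> space M \<Longrightarrow> 0 \<le> E m n x"
    and S_adapted: "\<And>n. S n \<in> borel_measurable (Finf M F n)"
    and asm: "asymptotic_supermartingale Ps F E"
    and conv: "uniform_L1_conv Ps E S"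
  shows "supermartingale_for Ps (Finf M F) S"
proof -
  have subF: "\<And>m n. subalgebra M (F m n)" using filt unfolding filtration_array_def by blast
  have stepF: "\<And>m n. sets (F m n) \<subseteq> sets (F (Suc m) n)" using filt unfolding filtration_array_def by blast
  have monoF: "\<And>k k' n. k \<le> k' \<Longrightarrow> sets (F k n) \<subseteq> sets (F k' n)"
  proof -
    fix k k' n :: nat assume "k \<le> k'"
    then show "sets (F k n) \<subseteq> sets (F k' n)"
      using lift_Suc_mono_le[of "\<lambda>k. sets (F k n)", OF stepF] by blast
  qed
  have spF: "\<And>m n. space (F m n) = space M" and setsF: "\<And>m n. sets (F m n) \<subseteq> sets M"
    using subF unfolding subalgebra_def by auto
  define A0 where "A0 n = (\<Union>k. sets (F k n))" for n
  have A0Pow: "A0 n \<subseteq> Pow (space M)" for n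
    unfolding A0_def using setsF sets.sets_into_space by blast
  have setsG: "sets (Finf M F n) = sigma_sets (space M) (A0 n)" for n
    unfolding Finf_def A0_def using A0Pow[of n] unfolding A0_def by (simp add: sets_measure_of)
  have spG: "space (Finf M F n) = space M" for n
    unfolding Finf_def by (simp add: space_measure_of_conv)
  have setsGM: "sets (Finf M F n) \<subseteq> sets M" for n
    unfolding setsG using A0Pow[of n] setsF unfolding A0_def
    by (intro sets.sigma_sets_subset) blast
  have key: "\<And>B. B \<in> sets (Finf M F n) \<Longrightarrow> (\<integral>x\<in>B. S (Suc n) x \<partial>P) \<le> (\<integral>x\<in>B. S n x \<partial>P)"
    if P: "P \<in> Ps" for P n
  proof -
    have ps: "prob_space P" and sP: "sets P = sets M" using Ps[OF P] by auto
    have spP: "space P = space M" using sP by (rule sets_eq_imp_space_eq)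
    interpret prob_space P by fact
    have intE: "\<And>m n. integrable P (E m n)" and intS: "\<And>n. integrable P (S n)"
      using conv P unfolding uniform_L1_conv_def by auto
    have cE: "\<And>n. (\<lambda>m. \<integral>\<^sup>+ x. ennreal \<bar>E m n x - S n x\<bar> \<partial>P) \<longlonglongrightarrow> 0"
      using conv P unfolding uniform_L1_conv_def
      by (intro sup_tendsto0[where Ps=Ps and g="\<lambda>P m. \<integral>\<^sup>+ x. ennreal \<bar>E m _ x - S _ x\<bar> \<partial>P"]) auto
    have cD: "(\<lambda>m. delta_pos_exp P F E m n) \<longlonglongrightarrow> 0"
      using asm P unfolding asymptotic_supermartingale_def
      by (intro sup_tendsto0[where Ps=Ps and g="\<lambda>P m. delta_pos_exp P F E m n"]) auto
    have cD': "(\<lambda>m. enn2real (delta_pos_exp P F E m n)) \<longlonglongrightarrow> 0"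
      using tendsto_enn2real[of "\<lambda>m. delta_pos_exp P F E m n" 0] cD by simp
    have step1: "(\<integral>x\<in>A. S (Suc n) x \<partial>P) \<le> (\<integral>x\<in>A. S n x \<partial>P)" if A: "A \<in> A0 n" for A
    proof -
      from A obtain k where Ak: "A \<in> sets (F k n)" unfolding A0_def by blast
      have AP: "A \<in> sets P" using Ak setsF sP by blast
      have ineq: "(\<integral>x\<in>A. E m (Suc n) x \<partial>P) \<le> (\<integral>x\<in>A. E m n x \<partial>P) + enn2real (delta_pos_exp P F E m n)"
        if mk: "m \<ge> k" for m
      proof -
        have Am: "A \<in> sets (F m n)" using monoF[OF mk] Ak by blast
        have subPF: "subalgebra P (F m n)" using subF[of m n] sP spP unfolding subalgebra_def by auto
        interpret finite_measure_subalgebra P "F m n"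
          by unfold_locales (rule subPF)
        define c where "c = real_cond_exp P (F m n) (E m (Suc n))"
        have ic: "integrable P c" unfolding c_def using intE by (rule real_cond_exp_int(1))
        define dl where "dl x = max 0 (c x - E m n x)" for x
        have idl: "integrable P dl" unfolding dl_def using ic intE by auto
        have dleq: "delta_pos_exp P F E m n = (\<integral>\<^sup>+ x. ennreal (dl x) \<partial>P)"
          unfolding delta_pos_exp_def dl_def c_def using intE by simp
        have dlint: "(\<integral>x. dl x \<partial>P) = enn2real (delta_pos_exp P F E m n)"
          unfolding dleq using idl by (subst integral_eq_nn_integral) (auto simp: dl_def)
        have i1: "integrable P (\<lambda>x. indicator A x * c x)" using integrable_mult_indicator[OF AP ic] by simp
        have "integrable P (\<lambda>x. E m n x + dl x)" using intE idl by auto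
        hence i2: "integrable P (\<lambda>x. indicator A x * (E m n x + dl x))"
          using integrable_mult_indicator[OF AP] by fastforce
        have i3: "integrable P (\<lambda>x. indicator A x * dl x)" using integrable_mult_indicator[OF AP idl] by simp
        have "(\<integral>x\<in>A. E m (Suc n) x \<partial>P) = (\<integral>x\<in>A. c x \<partial>P)"
          unfolding c_def using real_cond_exp_intA[OF intE Am] .
        also have "\<dots> \<le> (\<integral>x\<in>A. (E m n x + dl x) \<partial>P)"
          unfolding set_lebesgue_integral_def
          by (simp, intro integral_mono[OF i1 i2]) (auto simp: dl_def indicator_def)
        also have "\<dots> = (\<integral>x\<in>A. E m n x \<partial>P) + (\<integral>x\<in>A. dl x \<partial>P)"
          unfolding set_lebesgue_integral_def using i3 integrable_mult_indicator[OF AP intE]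
          by (simp add: distrib_left)
        also have "(\<integral>x\<in>A. dl x \<partial>P) \<le> (\<integral>x. dl x \<partial>P)"
          unfolding set_lebesgue_integral_def
          by (simp, intro integral_mono[OF i3 idl]) (auto simp: dl_def indicator_def)
        finally show ?thesis using dlint by simp
      qed
      have l1: "(\<lambda>m. \<integral>x\<in>A. E m (Suc n) x \<partial>P) \<longlonglongrightarrow> (\<integral>x\<in>A. S (Suc n) x \<partial>P)"
        by (rule setint_tendsto[OF intE intS cE AP])
      have l2: "(\<lambda>m. (\<integral>x\<in>A. E m n x \<partial>P) + enn2real (delta_pos_exp P F E m n)) \<longlonglongrightarrow> (\<integral>x\<in>A. S n x \<partial>P) + 0"
        by (intro tendsto_add setint_tendsto[OF intE intS cE AP] cD')
      have "(\<integral>x\<in>A. S (Suc n) x \<partial>P) \<le> (\<integral>x\<in>A. S n x \<partial>P) + 0"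
        by (rule LIMSEQ_le[OF l1 l2]) (use ineq in blast)
      then show ?thesis by simp
    qed
    define f where "f x = S n x - S (Suc n) x" for x
    have intf: "integrable P f" unfolding f_def using intS by auto
    define N where "N = density P (\<lambda>x. ennreal \<bar>f x\<bar>)"
    have finN: "finite_measure N" unfolding N_def
      by (rule finite_density_abs[OF _ intf]) (rule finite_measure_axioms)
    have sN: "sets N = sets M" "space N = space M" unfolding N_def using sP spP by auto
    have setint_f: "(\<integral>x\<in>X. f x \<partial>P) = (\<integral>x\<in>X. S n x \<partial>P) - (\<integral>x\<in>X. S (Suc n) x \<partial>P)"
      if "X \<in> sets P" for X
    proof -
      have "set_integrable P X (S n)" "set_integrable P X (S (Suc n))"
        unfolding set_integrable_def using intS that integrable_mult_indicator by blast+
      then show ?thesis unfolding f_def by (rule set_integral_diff(2))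
    qed
    fix B assume B: "B \<in> sets (Finf M F n)"
    have BP: "B \<in> sets P" using B setsGM sP by blast
    have Bs: "B \<in> sigma_sets (space M) (A0 n)" using B setsG by simp
    have approx: "\<forall>e>0. \<exists>A\<in>A0 n. measure N ((A - B) \<union> (B - A)) < e"
    proof (rule approx_sigma[OF finN _ _ _ _ _ Bs])
      show "A0 n \<subseteq> sets N" unfolding A0_def sN using setsF by blast
      show "space M = space N" using sN by simp
      show "{} \<in> A0 n" unfolding A0_def by blast
      show "space M - A \<in> A0 n" if "A \<in> A0 n" for A
        using that spF unfolding A0_def by (metis UN_iff sets.compl_sets)
      show "A \<union> A' \<in> A0 n" if "A \<in> A0 n" "A' \<in> A0 n" for A A'
      proof -
        from that obtain k k' where "A \<in> sets (F k n)" "A' \<in> sets (F k' n)" unfolding A0_def by blast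
        then have "A \<in> sets (F (max k k') n)" "A' \<in> sets (F (max k k') n)"
          using monoF[of k "max k k'" n] monoF[of k' "max k k'" n] by auto
        then show ?thesis unfolding A0_def by blast
      qed
    qed
    have "0 \<le> (\<integral>x\<in>B. f x \<partial>P)"
    proof (rule ccontr)
      assume neg: "\<not> 0 \<le> (\<integral>x\<in>B. f x \<partial>P)"
      then obtain A where A: "A \<in> A0 n" and mA: "measure N ((A - B) \<union> (B - A)) < - (\<integral>x\<in>B. f x \<partial>P)"
        using approx by (meson neg_0_less_iff_less not_le)
      have AP: "A \<in> sets P" using A setsF sP unfolding A0_def by blast
      have "0 \<le> (\<integral>x\<in>A. f x \<partial>P)" using step1[OF A] setint_f[OF AP] by simp
      moreover have "\<bar>(\<integral>x\<in>B. f x \<partial>P) - (\<integral>x\<in>A. f x \<partial>P)\<bar> \<le> measure N ((A - B) \<union> (B - A))"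
        unfolding N_def by (rule setint_diff_bound[OF intf AP BP])
      ultimately show False using mA by linarith
    qed
    then show "(\<integral>x\<in>B. S (Suc n) x \<partial>P) \<le> (\<integral>x\<in>B. S n x \<partial>P)" using setint_f[OF BP] by simp
  qed
  show ?thesis
    unfolding supermartingale_for_def
  proof (intro conjI allI ballI)
    fix n show "S n \<in> borel_measurable (Finf M F n)" by (rule S_adapted)
  next
    fix P n assume P: "P \<in> Ps"
    show "integrable P (S n)" using conv P unfolding uniform_L1_conv_def by auto
    have ps: "prob_space P" and sP: "sets P = sets M" using Ps[OF P] by auto
    have spP: "space P = space M" using sP by (rule sets_eq_imp_space_eq)
    have sub: "subalgebra P (Finf M F n)" unfolding subalgebra_def using spG setsGM sP spP by auto
    show "AE x in P. real_cond_exp P (Finf M F n) (S (Suc n)) x \<le> S n x"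
      by (rule cond_le_from_sets[OF ps sub])
         (use conv P key[OF P] S_adapted in \<open>auto simp: uniform_L1_conv_def\<close>)
  qed
qed

end
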